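(* Let $R_{ij},R_{ji},R_i,R_j\in SO(3)$. (1) If $\{R_{ij}^T g R_{ji} : g\in \mathbb{T}\}=\{R_i^T g R_j : g\in \mathbb{T}\}$, then there exist $g_{ij},g_{ji}\in\mathbb{T}$ and $h_{ij}\in\mathbb{O}$ such that $R_{ij}=h_{ij}g_{ij}R_i$ and $R_{ji}=h_{ij}g_{ji}R_j$. (2) If $\{R_{ij}^T g R_{ji} : g\in \mathbb{O}\}=\{R_i^T g R_j : g\in \mathbb{O}\}$, then there exist $g_{ij},g_{ji}\in\mathbb{O}$ such that $R_{ij}=g_{ij}R_i$ and $R_{ji}=g_{ji}R_j$.
   Context: In the fixed coordinate system, $\mathbb{O}$ is the group of all $3\times 3$ signed permutation matrices (exactly one nonzero entry, equal to $\pm1$, in each row and column) of determinant $1$ (24 elements), and $\mathbb{T}\subset\mathbb{O}$ is the 12-element subgroup of matrices $DP$ with $P$ the permutation matrix of an even permutation of $\{1,2,3\}$ and $D$ diagonal with entries $\pm1$ and $\det D=1$. *)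

theory Defs
  imports "HOL-Analysis.Analysis" "HOL-Combinatorics.Permutations"
begin

type_synonym mat3 = "real^3^3"

definition SO3 :: "mat3 set" where
  "SO3 = {R. transpose R ** R = mat 1 \<and> det R = 1}"

definition signed_perm_matrix :: "mat3 \<Rightarrow> bool" where
  "signed_perm_matrix A \<longleftrightarrow>
     (\<forall>i. \<exists>!j. A $ i $ j \<noteq> 0) \<and> (\<forall>j. \<exists>!i. A $ i $ j \<noteq> 0) \<and>
     (\<forall>i j. A $ i $ j \<in> {-1, 0, 1})"

definition octahedral_group :: "mat3 set" where
  "octahedral_group = {A. signed_perm_matrix A \<and> det A = 1}"

definition perm_matrix :: "(3 \<Rightarrow> 3) \<Rightarrow> mat3" where
  "perm_matrix p = (\<chi> i j. if p j = i then 1 else 0)"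

definition tetrahedral_group :: "mat3 set" where
  "tetrahedral_group = {D ** perm_matrix p | D p.
      p permutes (UNIV :: 3 set) \<and> evenperm p \<and>
      (\<forall>i j. i \<noteq> j \<longrightarrow> D $ i $ j = 0) \<and> (\<forall>i. D $ i $ i \<in> {-1, 1}) \<and> det D = 1}"

end

theory Submission
  imports Defs
begin


lemma neq3: "(1::3) \<noteq> 2" "(1::3) \<noteq> 3" "(2::3) \<noteq> 3" "(2::3) \<noteq> 1" "(3::3) \<noteq> 1" "(3::3) \<noteq> 2"
  by simp_all

lemma ex_3: "(\<exists>i::3. P i) \<longleftrightarrow> P 1 \<or> P 2 \<or> P 3"
  by (metis exhaust_3)

lemma ex1_3: "(\<exists>!i::3. P i) \<longleftrightarrow> (P 1 \<and> \<not>P 2 \<and> \<not>P 3) \<or> (\<not>P 1 \<and> P 2 \<and> \<not>P 3) \<or> (\<not>P 1 \<and> \<not>P 2 \<and> P 3)"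
  unfolding Ex1_def ex_3 forall_3 using neq3 by blast

lemma mm_entry: "((M::real^3^3) ** N)$i$j = M$i$1*N$1$j + M$i$2*N$2$j + M$i$3*N$3$j"
  by (simp add: matrix_matrix_mult_def sum_3)

lemma tr_entry: "(transpose (M::real^3^3))$i$j = M$j$i"
  by (simp add: transpose_def)

definition p3 :: "3 \<Rightarrow> 3" where "p3 = Transposition.transpose 1 2 \<circ> Transposition.transpose 2 3"
lemma p3_vals: "p3 1 = 2" "p3 2 = 3" "p3 3 = 1"
  by (simp_all add: p3_def Transposition.transpose_def)
lemma p3_perm: "p3 permutes UNIV" "evenperm p3"
  unfolding p3_def
  by (auto intro!: permutes_compose permutes_swap_id simp: evenperm_comp evenperm_swap permutation_swap_id permutation_compose)

definition ent :: "mat3 \<Rightarrow> bool" where "ent M \<longleftrightarrow> (\<forall>i j. M$i$j \<in> {-1,0,1})"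
definition orth :: "mat3 \<Rightarrow> bool" where "orth M \<longleftrightarrow> transpose M ** M = mat 1"

lemma S1: "(x::real) \<in> {-1,0,1} \<Longrightarrow> y \<in> {-1,0,1} \<Longrightarrow> z \<in> {-1,0,1} \<Longrightarrow> x*x+y*y+z*z = 1
  \<Longrightarrow> x*y = 0 \<and> x*z = 0 \<and> y*z = 0 \<and> y*x = 0 \<and> z*x = 0 \<and> z*y = 0"
  by auto

lemma S2: "(x1::real) \<in> {-1,0,1} \<Longrightarrow> x2 \<in> {-1,0,1} \<Longrightarrow> x3 \<in> {-1,0,1} \<Longrightarrow> x1*x1+x2*x2+x3*x3 = 1
  \<Longrightarrow> y1 \<in> {-1,0,1} \<Longrightarrow> y2 \<in> {-1,0,1} \<Longrightarrow> y3 \<in> {-1,0,1} \<Longrightarrow> x1*y1+x2*y2+x3*y3 \<in> {-1,0,1}"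
proof -
  assume a: "x1 \<in> {-1,0,1}" "x2 \<in> {-1,0,1}" "x3 \<in> {-1,0,1}" "x1*x1+x2*x2+x3*x3 = 1"
    "y1 \<in> {-1,0,1}" "y2 \<in> {-1,0,1}" "y3 \<in> {-1,0,1}"
  have "(x1 \<in> {-1,1} \<and> x2 = 0 \<and> x3 = 0) \<or> (x2 \<in> {-1,1} \<and> x1 = 0 \<and> x3 = 0) \<or> (x3 \<in> {-1,1} \<and> x1 = 0 \<and> x2 = 0)"
    using a(1-4) by auto
  then show ?thesis using a(5-7) by auto
qed

lemma S3: "(a::real) \<in> {-1,0,1} \<Longrightarrow> b \<in> {-1,0,1} \<Longrightarrow> c \<in> {-1,0,1} \<Longrightarrow>
  (a*a+b*b+c*c = 1) \<longleftrightarrow> ((a\<noteq>0 \<and> b=0 \<and> c=0) \<or> (a=0 \<and> b\<noteq>0 \<and> c=0) \<or> (a=0 \<and> b=0 \<and> c\<noteq>0))"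
  by auto

lemma mat_eq3: "(M::real^3^3) = N \<longleftrightarrow> (\<forall>i j. M$i$j = N$i$j)"
  by (simp add: vec_eq_iff)

lemma orth_iff: "orth M \<longleftrightarrow> (\<forall>j l. M$1$j*M$1$l + M$2$j*M$2$l + M$3$j*M$3$l = (if j = l then 1 else 0))"
  unfolding orth_def mat_eq3 mm_entry tr_entry by (simp add: mat_def)

lemma orthT: "orth M \<Longrightarrow> (\<forall>i k. M$i$1*M$k$1 + M$i$2*M$k$2 + M$i$3*M$k$3 = (if i = k then 1 else 0))"
proof -
  assume "orth M"
  then have "M ** transpose M = mat 1" unfolding orth_def using matrix_left_right_inverse by blast
  then show ?thesis unfolding mat_eq3 mm_entry tr_entry by (simp add: mat_def)
qed

lemma O_imp: assumes "M \<in> octahedral_group" shows "ent M" "orth M" "det M = 1"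
proof -
  have sp: "signed_perm_matrix M" and d: "det M = 1" using assms by (auto simp: octahedral_group_def)
  show e: "ent M" using sp by (auto simp: signed_perm_matrix_def ent_def)
  show "det M = 1" by (fact d)
  have e': "\<And>i j. M$i$j \<in> {-1,0,1}" using e by (auto simp: ent_def)
  have col: "M$1$j*M$1$j + M$2$j*M$2$j + M$3$j*M$3$j = 1" for j
    using sp S3[OF e'[of 1 j] e'[of 2 j] e'[of 3 j]] unfolding signed_perm_matrix_def ex1_3 by blast
  have row: "M$i$1*M$i$1 + M$i$2*M$i$2 + M$i$3*M$i$3 = 1" for i
    using sp S3[OF e'[of i 1] e'[of i 2] e'[of i 3]] unfolding signed_perm_matrix_def ex1_3 by blast
  have r: "M$i$1*M$i$2 = 0 \<and> M$i$1*M$i$3 = 0 \<and> M$i$2*M$i$3 = 0 \<and> M$i$2*M$i$1 = 0 \<and> M$i$3*M$i$1 = 0 \<and> M$i$3*M$i$2 = 0" for i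
    using S1[OF e'[of i 1] e'[of i 2] e'[of i 3] row[of i]] by blast
  show "orth M" unfolding orth_iff forall_3 by (simp only: neq3 if_False if_True col r add_0_left add_0_right simp_thms)
qed

lemma O_intro: assumes "ent M" "orth M" "det M = 1" shows "M \<in> octahedral_group"
proof -
  have e': "\<And>i j. M$i$j \<in> {-1,0,1}" using assms by (auto simp: ent_def)
  have col: "M$1$j*M$1$j + M$2$j*M$2$j + M$3$j*M$3$j = 1" for j
    using assms(2) unfolding orth_iff by (metis (full_types))
  have row: "M$i$1*M$i$1 + M$i$2*M$i$2 + M$i$3*M$i$3 = 1" for i
    using orthT[OF assms(2)] by (metis (full_types))
  have "signed_perm_matrix M" unfolding signed_perm_matrix_def ex1_3
  proof (intro conjI allI)
    fix i show "M$i$1 \<noteq> 0 \<and> \<not> M$i$2 \<noteq> 0 \<and> \<not> M$i$3 \<noteq> 0 \<or> \<not> M$i$1 \<noteq> 0 \<and> M$i$2 \<noteq> 0 \<and> \<not> M$i$3 \<noteq> 0 \<or> \<not> M$i$1 \<noteq> 0 \<and> \<not> M$i$2 \<noteq> 0 \<and> M$i$3 \<noteq> 0"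
      using S3[OF e'[of i 1] e'[of i 2] e'[of i 3]] row[of i] by blast
  next
    fix j show "M$1$j \<noteq> 0 \<and> \<not> M$2$j \<noteq> 0 \<and> \<not> M$3$j \<noteq> 0 \<or> \<not> M$1$j \<noteq> 0 \<and> M$2$j \<noteq> 0 \<and> \<not> M$3$j \<noteq> 0 \<or> \<not> M$1$j \<noteq> 0 \<and> \<not> M$2$j \<noteq> 0 \<and> M$3$j \<noteq> 0"
      using S3[OF e'[of 1 j] e'[of 2 j] e'[of 3 j]] col[of j] by blast
  next
    fix i j show "M$i$j \<in> {-1,0,1}" by (fact e')
  qed
  then show ?thesis using assms(3) by (simp add: octahedral_group_def)
qed


lemma orth_mult: "orth A \<Longrightarrow> orth B \<Longrightarrow> orth (A ** B)"
  unfolding orth_def by (metis matrix_transpose_mul matrix_mul_assoc matrix_mul_lid)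

lemma orth_transpose: "orth A \<Longrightarrow> orth (transpose A)"
  unfolding orth_def by (simp add: matrix_left_right_inverse)

lemma perm_orth: assumes "p permutes (UNIV::3 set)" shows "orth (perm_matrix p)"
proof -
  have inj: "p j = p l \<longleftrightarrow> j = l" for j l using permutes_inj[OF assms] by (meson injD)
  have "(if p j = 1 then 1 else 0) * (if p l = 1 then 1 else 0) + (if p j = 2 then 1 else 0) * (if p l = 2 then 1 else 0)
     + (if p j = 3 then 1 else 0) * (if p l = 3 then 1 else 0) = (if p j = p l then 1 else (0::real))" for j l
    using exhaust_3[of "p j"] exhaust_3[of "p l"] neq3 by auto
  then show ?thesis unfolding orth_iff perm_matrix_def using inj by simp
qed


lemma diag_orth: assumes "\<forall>i j. i \<noteq> j \<longrightarrow> D $ i $ j = 0" "\<forall>i. D $ i $ i \<in> {-1, 1}"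
  shows "orth D" "ent D"
proof -
  have d: "D$i$i * D$i$i = 1" for i
  proof -
    have "D$i$i \<in> {-1,1}" using assms(2) by blast
    then show ?thesis by auto
  qed
  have z: "D$1$2 = 0" "D$1$3 = 0" "D$2$1 = 0" "D$2$3 = 0" "D$3$1 = 0" "D$3$2 = 0" using assms(1) neq3 by auto
  show "orth D" unfolding orth_iff forall_3 using z d neq3 by simp
  show "ent D" unfolding ent_def using assms by (metis insertCI insert_commute)
qed

lemma T_imp: assumes "M \<in> tetrahedral_group" shows "ent M" "orth M"
proof -
  obtain D p where M: "M = D ** perm_matrix p" and p: "p permutes UNIV" and
    D1: "\<forall>i j. i \<noteq> j \<longrightarrow> D $ i $ j = 0" and D2: "\<forall>i. D $ i $ i \<in> {-1, 1}"
    using assms unfolding tetrahedral_group_def by (smt (verit) mem_Collect_eq)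
  show "orth M" unfolding M by (rule orth_mult[OF diag_orth(1)[OF D1 D2] perm_orth[OF p]])
  have "M$i$j = D$i$i * (if p j = i then 1 else 0)" for i j
  proof -
    have "M$i$j = (\<Sum>k\<in>UNIV. D$i$k * (if p j = k then 1 else 0))"
      unfolding M by (simp add: matrix_matrix_mult_def perm_matrix_def)
    also have "\<dots> = (\<Sum>k\<in>UNIV. if k = i then D$i$i * (if p j = i then 1 else 0) else 0)"
      by (rule sum.cong) (use D1 in simp_all)
    finally show ?thesis by simp
  qed
  moreover have "D$i$i * (if p j = i then 1 else 0) \<in> {-1,0,1::real}" for i j
  proof -
    have "D$i$i \<in> {-1,1}" using D2 by blast
    then show ?thesis by (cases "p j = i") auto
  qed
  ultimately show "ent M" unfolding ent_def by simp
qed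
lemma sq1: "(x::real)*x = 1 \<longleftrightarrow> x = 1 \<or> x = -1"
  by (metis mult_cancel_left1 mult_minus1 square_eq_1_iff)

lemma rowpat: fixes x y z :: real
  assumes "x*x \<in> {0,1/2,1}" "y*y \<in> {0,1/2,1}" "z*z \<in> {0,1/2,1}" "x*x+y*y+z*z = 1"
    "\<not> (x \<in> {-1,0,1} \<and> y \<in> {-1,0,1} \<and> z \<in> {-1,0,1})"
  shows "(x=0 \<and> y*y=1/2 \<and> z*z=1/2) \<or> (y=0 \<and> x*x=1/2 \<and> z*z=1/2) \<or> (z=0 \<and> x*x=1/2 \<and> y*y=1/2)"
proof -
  have x0: "x*x = 0 \<longleftrightarrow> x = 0" "y*y = 0 \<longleftrightarrow> y = 0" "z*z = 0 \<longleftrightarrow> z = 0" by auto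
  consider "x*x = 0" | "x*x = 1/2" | "x*x = 1" using assms(1) by blast
  then show ?thesis
  proof cases
    case 1
    consider "y*y = 0" | "y*y = 1/2" | "y*y = 1" using assms(2) by blast
    then show ?thesis
    proof cases
      case 1 then have "z*z = 1" using \<open>x*x = 0\<close> assms(4) by linarith
      then show ?thesis using 1 \<open>x*x = 0\<close> x0 sq1[of z] assms(5) by auto
    next
      case 2 then have "z*z = 1/2" using \<open>x*x = 0\<close> assms(4) by linarith
      then show ?thesis using 2 \<open>x*x = 0\<close> x0 by auto
    next
      case 3 then have "z*z = 0" using \<open>x*x = 0\<close> assms(4) by linarith
      then show ?thesis using 3 \<open>x*x = 0\<close> x0 sq1[of y] assms(5) by auto
    qed
  next
    case 2
    have zz: "z*z \<ge> 0" by simp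
    consider "y*y = 0" | "y*y = 1/2" | "y*y = 1" using assms(2) by blast
    then show ?thesis
    proof cases
      case 3 then show ?thesis using 2 zz assms(4) by linarith
    next
      case 1 then have "z*z = 1/2" using 2 assms(4) by linarith
      then show ?thesis using 1 2 x0 by auto
    next
      case 3: 2 then have "z*z = 0" using 2 assms(4) by linarith
      then show ?thesis using 3 2 x0 by auto
    qed
  next
    case 3
    then have "y*y + z*z = 0" using assms(4) by linarith
    then have "y = 0" "z = 0" by (simp_all add: sum_squares_eq_zero_iff)
    then show ?thesis using 3 sq1[of x] assms(5) by auto
  qed
qed


lemma contra9: fixes a11 a12 a13 a21 a22 a23 a31 a32 a33 :: real
  assumes r1: "(a11=0 \<and> a12*a12=1/2 \<and> a13*a13=1/2) \<or> (a12=0 \<and> a11*a11=1/2 \<and> a13*a13=1/2) \<or> (a13=0 \<and> a11*a11=1/2 \<and> a12*a12=1/2)"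
  and r2: "(a21=0 \<and> a22*a22=1/2 \<and> a23*a23=1/2) \<or> (a22=0 \<and> a21*a21=1/2 \<and> a23*a23=1/2) \<or> (a23=0 \<and> a21*a21=1/2 \<and> a22*a22=1/2)"
  and r3: "(a31=0 \<and> a32*a32=1/2 \<and> a33*a33=1/2) \<or> (a32=0 \<and> a31*a31=1/2 \<and> a33*a33=1/2) \<or> (a33=0 \<and> a31*a31=1/2 \<and> a32*a32=1/2)"
  and o12: "a11*a21+a12*a22+a13*a23 = 0" and o13: "a11*a31+a12*a32+a13*a33 = 0" and o23: "a21*a31+a22*a32+a23*a33 = 0"
  and c1: "a11*a11+a21*a21+a31*a31 = 1" and c2: "a12*a12+a22*a22+a32*a32 = 1" and c3: "a13*a13+a23*a23+a33*a33 = 1"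
  shows False
  using r1 r2 r3 o12 o13 o23 c1 c2 c3 
  by (elim disjE conjE) auto




definition Dm :: "3 \<Rightarrow> mat3" where "Dm m = (\<chi> i j. if i = j then (if i = m then 1 else -1) else 0)"
definition P3 :: mat3 where "P3 = perm_matrix p3"

lemma T_intro: assumes "M = D ** perm_matrix p" "p permutes UNIV" "evenperm p"
  "\<forall>i j. i \<noteq> j \<longrightarrow> D $ i $ j = 0" "\<forall>i. D $ i $ i \<in> {-1, 1}" "det D = 1"
  shows "M \<in> tetrahedral_group"
  unfolding tetrahedral_group_def mem_Collect_eq
  apply (rule exI[of _ D], rule exI[of _ p])
  using assms by simp

lemma perm_id: "perm_matrix id = mat 1"
  by (simp add: perm_matrix_def mat_def vec_eq_iff eq_commute)

lemma Dm_T: "Dm m \<in> tetrahedral_group"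
proof -
  have off: "\<forall>i j. i \<noteq> j \<longrightarrow> Dm m $ i $ j = 0" by (simp add: Dm_def)
  have dg: "\<forall>i. Dm m $ i $ i \<in> {-1, 1}" by (simp add: Dm_def)
  have "det (Dm m) = prod (\<lambda>i. Dm m$i$i) UNIV" by (rule det_diagonal) (simp add: Dm_def)
  also have "\<dots> = 1" unfolding UNIV_3 using exhaust_3[of m] neq3 by (auto simp: Dm_def)
  finally have d: "det (Dm m) = 1" .
  have "Dm m = Dm m ** perm_matrix id" by (simp add: perm_id)
  then show ?thesis using off dg d permutes_id[of UNIV] by (intro T_intro[where p=id and D="Dm m"]) simp_all
qed

lemma P3_T: "P3 \<in> tetrahedral_group"
proof -
  have "P3 = mat 1 ** perm_matrix p3" by (simp add: P3_def)
  moreover have "\<forall>i j. i \<noteq> j \<longrightarrow> (mat 1::mat3) $ i $ j = 0" "\<forall>i. (mat 1::mat3) $ i $ i \<in> {-1, 1}"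
    by (simp_all add: mat_def)
  ultimately show ?thesis using p3_perm by (intro T_intro[where p=p3 and D="mat 1"]) simp_all
qed

lemma I_T: "mat 1 \<in> tetrahedral_group"
proof -
  have "\<forall>i j. i \<noteq> j \<longrightarrow> (mat 1::mat3) $ i $ j = 0" "\<forall>i. (mat 1::mat3) $ i $ i \<in> {-1, 1}"
    by (simp_all add: mat_def)
  then show ?thesis using permutes_id[of UNIV] by (intro T_intro[where p=id and D="mat 1"]) (simp_all add: perm_id)
qed

lemma det_P3: "det P3 = 1"
proof -
  have "P3$i$j = (if p3 j = i then 1 else 0)" for i j by (simp add: P3_def perm_matrix_def)
  then show ?thesis unfolding det_3 by (simp add: p3_vals neq3)
qed

lemma ent_mult: assumes "ent M" "orth M" "ent N" shows "ent (M ** N)"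
proof -
  have e: "\<And>i j. M$i$j \<in> {-1,0,1}" "\<And>i j. N$i$j \<in> {-1,0,1}" using assms by (auto simp: ent_def)
  have row: "M$i$1*M$i$1 + M$i$2*M$i$2 + M$i$3*M$i$3 = 1" for i
    using orthT[OF assms(2)] by (metis (full_types))
  show ?thesis unfolding ent_def mm_entry
  proof (intro allI)
    fix i j show "M$i$1*N$1$j + M$i$2*N$2$j + M$i$3*N$3$j \<in> {-1,0,1}"
      by (rule S2[OF e(1)[of i 1] e(1)[of i 2] e(1)[of i 3] row[of i] e(2)[of 1 j] e(2)[of 2 j] e(2)[of 3 j]])
  qed
qed


lemma Dm_diag: fixes A :: mat3 shows "(transpose A ** Dm m ** A)$k$k = 2*(A$m$k*A$m$k) - (A$1$k*A$1$k + A$2$k*A$2$k + A$3$k*A$3$k)"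
proof -
  consider "m = 1" | "m = 2" | "m = 3" using exhaust_3 by blast
  then show ?thesis
    unfolding mm_entry tr_entry by cases (simp_all add: Dm_def neq3 algebra_simps)
qed

lemma P3A: fixes A :: mat3 shows "(P3 ** A)$1$k = A$3$k" "(P3 ** A)$2$k = A$1$k" "(P3 ** A)$3$k = A$2$k"
proof -
  have "P3$i$j = (if p3 j = i then 1 else 0)" for i j by (simp add: P3_def perm_matrix_def)
  then show "(P3 ** A)$1$k = A$3$k" "(P3 ** A)$2$k = A$1$k" "(P3 ** A)$3$k = A$2$k"
    unfolding mm_entry by (simp_all add: p3_vals neq3)
qed


lemma key:
  fixes A :: mat3
  assumes oA: "orth A" and eD: "\<And>m. ent (transpose A ** Dm m ** A)"
    and eQ: "ent (transpose A ** P3 ** A)" and oQ: "orth (transpose A ** P3 ** A)"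
  shows "ent A"
proof -
  define Q where "Q = transpose A ** P3 ** A"
  have col: "A$1$j*A$1$j + A$2$j*A$2$j + A$3$j*A$3$j = 1" for j
    using oA unfolding orth_iff by (metis (full_types))
  have rowo: "A$i$1*A$k$1 + A$i$2*A$k$2 + A$i$3*A$k$3 = (if i = k then 1 else 0)" for i k
    using orthT[OF oA] by blast
  have sq: "A$m$k * A$m$k \<in> {0,1/2,1}" for m k
  proof -
    have e: "(transpose A ** Dm m ** A)$k$k \<in> {-1,0,1}" using eD by (simp add: ent_def)
    then have "2*(A$m$k*A$m$k) - 1 \<in> {-1,0,1}" using Dm_diag[of A m k] col[of k] by simp
    then show ?thesis by auto
  qed
  have AA: "A ** transpose A = mat 1" using oA unfolding orth_def using matrix_left_right_inverse by blast
  have AQ: "A ** Q = P3 ** A"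
    unfolding Q_def by (simp add: matrix_mul_assoc AA)
  have eQ': "\<And>i j. Q$i$j \<in> {-1,0,1}" using eQ unfolding Q_def ent_def by blast
  have colQ: "Q$1$j*Q$1$j + Q$2$j*Q$2$j + Q$3$j*Q$3$j = 1" for j
    using oQ unfolding orth_iff Q_def[symmetric] by (metis (full_types))
  have inv: "(P3 ** A)$m$k \<in> {-1,0,1}" if h: "\<forall>k. A$m$k \<in> {-1,0,1}" for m k
  proof -
    have "(A ** Q)$m$k = Q$1$k*A$m$1 + Q$2$k*A$m$2 + Q$3$k*A$m$3"
      unfolding mm_entry by (simp add: mult.commute)
    also have "\<dots> \<in> {-1,0,1}"
      by (rule S2[OF eQ' eQ' eQ' colQ]) (use h in blast)+
    finally show ?thesis unfolding AQ .
  qed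
  let ?r = "\<lambda>m. \<forall>k. A$m$k \<in> {-1,0,1}"
  have r13: "?r 1 \<Longrightarrow> ?r 3" using inv[of 1] P3A(1)[of A] by metis
  have r32: "?r 3 \<Longrightarrow> ?r 2" using inv[of 3] P3A(3)[of A] by metis
  have r21: "?r 2 \<Longrightarrow> ?r 1" using inv[of 2] P3A(2)[of A] by metis
  show ?thesis
  proof (cases "?r 1 \<or> ?r 2 \<or> ?r 3")
    case True
    then have "?r 1 \<and> ?r 2 \<and> ?r 3" using r13 r32 r21 by blast
    then show ?thesis unfolding ent_def forall_3 by blast
  next
    case False
    have rp: "(A$m$1=0 \<and> A$m$2*A$m$2=1/2 \<and> A$m$3*A$m$3=1/2) \<or> (A$m$2=0 \<and> A$m$1*A$m$1=1/2 \<and> A$m$3*A$m$3=1/2) \<or> (A$m$3=0 \<and> A$m$1*A$m$1=1/2 \<and> A$m$2*A$m$2=1/2)" for m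
    proof (rule rowpat[OF sq sq sq])
      show "A$m$1*A$m$1 + A$m$2*A$m$2 + A$m$3*A$m$3 = 1" using rowo[of m m] by simp
      show "\<not> (A$m$1 \<in> {-1,0,1} \<and> A$m$2 \<in> {-1,0,1} \<and> A$m$3 \<in> {-1,0,1})"
        using False forall_3[of "\<lambda>k. A$m$k \<in> {-1,0,1}"] exhaust_3[of m] by metis
    qed
    show ?thesis
      by (rule FalseE, rule contra9[OF rp[of 1] rp[of 2] rp[of 3]])
         (use rowo[of 1 2] rowo[of 1 3] rowo[of 2 3] col neq3 in simp_all)
  qed
qed


lemma det_Dm: "det (Dm m) = 1"
proof -
  have "det (Dm m) = prod (\<lambda>i. Dm m$i$i) UNIV" by (rule det_diagonal) (simp add: Dm_def)
  also have "\<dots> = 1" unfolding UNIV_3 using exhaust_3[of m] neq3 by (auto simp: Dm_def)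
  finally show ?thesis .
qed

lemma ent_transpose: "ent M \<Longrightarrow> ent (transpose M)"
  by (simp add: ent_def tr_entry)

lemma SO3_D: "R \<in> SO3 \<Longrightarrow> orth R" "R \<in> SO3 \<Longrightarrow> det R = 1" "R \<in> SO3 \<Longrightarrow> R ** transpose R = mat 1"
  by (auto simp: SO3_def orth_def matrix_left_right_inverse)

lemma conj_gen:
  fixes G :: "mat3 set"
  assumes "Ri \<in> SO3" "Rj \<in> SO3"
    "{transpose Rij ** g ** Rji | g. g \<in> G} = {transpose Ri ** g ** Rj | g. g \<in> G}" "g \<in> G"
  shows "transpose (Rij ** transpose Ri) ** g ** (Rji ** transpose Rj) \<in> G"
proof -
  have "transpose Rij ** g ** Rji \<in> {transpose Ri ** g ** Rj | g. g \<in> G}"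
    using assms(3,4) by blast
  then obtain g' where g': "g' \<in> G" "transpose Rij ** g ** Rji = transpose Ri ** g' ** Rj" by blast
  have "transpose (Rij ** transpose Ri) ** g ** (Rji ** transpose Rj) = Ri ** (transpose Rij ** g ** Rji) ** transpose Rj"
    by (simp add: matrix_transpose_mul matrix_mul_assoc)
  also have "\<dots> = (Ri ** transpose Ri) ** g' ** (Rj ** transpose Rj)"
    unfolding g'(2) by (simp add: matrix_mul_assoc)
  also have "\<dots> = g'" using SO3_D(3)[OF assms(1)] SO3_D(3)[OF assms(2)] by simp
  finally show ?thesis using g'(1) by simp
qed

lemma main_gen:
  fixes G :: "mat3 set"
  assumes S: "Rij \<in> SO3" "Rji \<in> SO3" "Ri \<in> SO3" "Rj \<in> SO3"
    and H: "{transpose Rij ** g ** Rji | g. g \<in> G} = {transpose Ri ** g ** Rj | g. g \<in> G}"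
    and G1: "mat 1 \<in> G" and GD: "\<And>m. Dm m \<in> G" and GP: "P3 \<in> G" and Ge: "\<And>g. g \<in> G \<Longrightarrow> ent g \<and> orth g"
  defines "A \<equiv> Rij ** transpose Ri" and "B \<equiv> Rji ** transpose Rj"
  shows "A \<in> octahedral_group" "transpose A ** B \<in> G" "Rij = A ** Ri" "Rji = A ** (transpose A ** B) ** Rj"
proof -
  have cg: "\<And>g. g \<in> G \<Longrightarrow> transpose A ** g ** B \<in> G"
    unfolding A_def B_def by (rule conj_gen[OF S(3,4) H])
  have oA: "orth A" unfolding A_def by (intro orth_mult orth_transpose SO3_D S)
  have oB: "orth B" unfolding B_def by (intro orth_mult orth_transpose SO3_D S)
  have dA: "det A = 1" unfolding A_def using S by (simp add: det_mul det_transpose SO3_D)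
  have AA: "A ** transpose A = mat 1" using oA unfolding orth_def using matrix_left_right_inverse by blast
  have BB: "B ** transpose B = mat 1" using oB unfolding orth_def using matrix_left_right_inverse by blast
  define c where "c = transpose A ** B"
  show cG: "transpose A ** B \<in> G" using cg[OF G1] by simp
  have Bc: "B = A ** c" unfolding c_def by (simp add: matrix_mul_assoc AA)
  have conj: "ent (transpose A ** g ** A) \<and> orth (transpose A ** g ** A)" if g: "g \<in> G" for g
  proof -
    have eq: "transpose A ** g ** A = (transpose A ** g ** B) ** transpose c"
    proof -
      have "B ** (transpose B ** A) = A" by (simp add: matrix_mul_assoc BB)
      then show ?thesis unfolding c_def by (simp add: matrix_transpose_mul matrix_mul_assoc[symmetric])
    qed
    have t: "ent (transpose A ** g ** B)" "orth (transpose A ** g ** B)" using Ge[OF cg[OF g]] by auto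
    have cc: "ent c" "orth c" using Ge cG unfolding c_def by auto
    show ?thesis unfolding eq
      using ent_mult[OF t(1) t(2) ent_transpose[OF cc(1)]] orth_mult[OF t(2) orth_transpose[OF cc(2)]] by simp
  qed
  have "ent A" using key[OF oA] conj GD GP by blast
  then show "A \<in> octahedral_group" using O_intro oA dA by blast
  show "Rij = A ** Ri" unfolding A_def using SO3_D(1)[OF S(3)] by (simp add: matrix_mul_assoc[symmetric] orth_def)
  show "Rji = A ** (transpose A ** B) ** Rj"
    using Bc SO3_D(1)[OF S(4)] unfolding c_def B_def by (metis matrix_mul_assoc matrix_mul_rid orth_def)
qed


lemma T_imp': "g \<in> tetrahedral_group \<Longrightarrow> ent g \<and> orth g"
  using T_imp by blast

lemma O_imp': "g \<in> octahedral_group \<Longrightarrow> ent g \<and> orth g"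
  using O_imp by blast

lemma I_O: "mat 1 \<in> octahedral_group"
  using O_intro T_imp[OF I_T] by simp

lemma Dm_O: "Dm m \<in> octahedral_group"
  using O_intro T_imp[OF Dm_T] det_Dm by blast

lemma P3_O: "P3 \<in> octahedral_group"
  using O_intro T_imp[OF P3_T] det_P3 by blast

theorem corollary1:
  fixes Rij Rji Ri Rj :: "real^3^3"
  assumes "Rij \<in> SO3" and "Rji \<in> SO3" and "Ri \<in> SO3" and "Rj \<in> SO3"
  shows "({transpose Rij ** g ** Rji | g. g \<in> tetrahedral_group} =
            {transpose Ri ** g ** Rj | g. g \<in> tetrahedral_group}
          \<longrightarrow> (\<exists>gij \<in> tetrahedral_group. \<exists>gji \<in> tetrahedral_group. \<exists>hij \<in> octahedral_group.
                 Rij = hij ** gij ** Ri \<and> Rji = hij ** gji ** Rj))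
       \<and> ({transpose Rij ** g ** Rji | g. g \<in> octahedral_group} =
            {transpose Ri ** g ** Rj | g. g \<in> octahedral_group}
          \<longrightarrow> (\<exists>gij \<in> octahedral_group. \<exists>gji \<in> octahedral_group.
                 Rij = gij ** Ri \<and> Rji = gji ** Rj))"
proof (intro conjI impI)
  assume H: "{transpose Rij ** g ** Rji | g. g \<in> tetrahedral_group} =
            {transpose Ri ** g ** Rj | g. g \<in> tetrahedral_group}"
  note r = main_gen[OF assms H I_T Dm_T P3_T T_imp']
  show "\<exists>gij \<in> tetrahedral_group. \<exists>gji \<in> tetrahedral_group. \<exists>hij \<in> octahedral_group.
                 Rij = hij ** gij ** Ri \<and> Rji = hij ** gji ** Rj"
    by (rule bexI[OF _ I_T], rule bexI[OF _ r(2)], rule bexI[OF _ r(1)]) (simp add: r(3,4)[symmetric])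
next
  assume H: "{transpose Rij ** g ** Rji | g. g \<in> octahedral_group} =
            {transpose Ri ** g ** Rj | g. g \<in> octahedral_group}"
  note r = main_gen[OF assms H I_O Dm_O P3_O O_imp']
  let ?A = "Rij ** transpose Ri" and ?c = "transpose (Rij ** transpose Ri) ** (Rji ** transpose Rj)"
  have "?A ** ?c \<in> octahedral_group"
  proof (rule O_intro)
    show "ent (?A ** ?c)" using ent_mult O_imp[OF r(1)] O_imp(1)[OF r(2)] by blast
    show "orth (?A ** ?c)" using orth_mult O_imp[OF r(1)] O_imp(2)[OF r(2)] by blast
    show "det (?A ** ?c) = 1" using O_imp(3)[OF r(1)] O_imp(3)[OF r(2)] by (simp add: det_mul)
  qed
  then show "\<exists>gij \<in> octahedral_group. \<exists>gji \<in> octahedral_group. Rij = gij ** Ri \<and> Rji = gji ** Rj"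
    using r(1,3,4) by (metis matrix_mul_assoc)
qed

end
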